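(* Let $\alpha>0$, let $\Lambda$ be a finite graph, and let $\Psi$ be a commuting interaction on $\Lambda$ with $\|\Psi\|_{F_\alpha}<\infty$, where $F_\alpha(r)=(1+r)^{-\alpha}$. Then for all disjoint $X,Y\subset\Lambda$, all $A\in\mathcal{A}_X$, $B\in\mathcal{A}_Y$ and all $t\in\mathbb{R}$, $$\big\|[\tau^\Lambda_t(A),B]\big\|\le 4\,\|\Psi\|_{F_\alpha}\,\|A\|\,\|B\|\,|X|\,|Y|\,|t|\,F_\alpha(\mathrm{dist}(X,Y)).$$
   Context: $\Lambda$ has graph distance $d$. Each site carries $\mathbb{C}^q$, $\mathcal{A}_Z=\mathcal{B}(\bigotimes_{x\in Z}\mathbb{C}^q)$ embedded in $\mathcal{A}_\Lambda$ via $A\mapsto A\otimes\mathbf{1}$. An interaction assigns to each $Z\subset\Lambda$ a self-adjoint $\Psi(Z)\in\mathcal{A}_Z$; it is commuting if $[\Psi(Z),\Psi(Z')]=0$ for all $Z,Z'$. $\|\Psi\|_F=\sup_{x,y\in\Lambda}\sum_{Z\ni x,y}\|\Psi(Z)\|/F(d(x,y))$. $H_\Lambda=\sum_{Z\subset\Lambda}\Psi(Z)$ and $\tau^\Lambda_t(A)=e^{itH_\Lambda}Ae^{-itH_\Lambda}$. *)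

theory Defs
  imports "HOL-Analysis.Analysis"
begin

(* Sites: a finite type 'v (the vertex set Lambda); one-site space C^q with basis 'q
   (q = CARD('q)).  The Hilbert space (C^q)^{tensor Lambda} is identified with
   complex ^ ('v => 'q) (functions on configurations), operators with matrices
   complex ^ ('v => 'q) ^ ('v => 'q) acting by *v. *)

type_synonym ('v,'q) op = "complex ^ ('v \<Rightarrow> 'q) ^ ('v \<Rightarrow> 'q)"

definition walk :: "('v \<Rightarrow> 'v \<Rightarrow> bool) \<Rightarrow> nat \<Rightarrow> 'v \<Rightarrow> 'v \<Rightarrow> bool" where
  "walk E n x y \<longleftrightarrow> (\<exists>p::nat \<Rightarrow> 'v. p 0 = x \<and> p n = y \<and>
      (\<forall>i<n. E (p i) (p (Suc i)) \<or> E (p (Suc i)) (p i)))"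

definition connected_graph :: "('v \<Rightarrow> 'v \<Rightarrow> bool) \<Rightarrow> bool" where
  "connected_graph E \<longleftrightarrow> (\<forall>x y. \<exists>n. walk E n x y)"

definition gdist :: "('v \<Rightarrow> 'v \<Rightarrow> bool) \<Rightarrow> 'v \<Rightarrow> 'v \<Rightarrow> nat" where
  "gdist E x y = (LEAST n. walk E n x y)"

definition setdist :: "('v \<Rightarrow> 'v \<Rightarrow> bool) \<Rightarrow> 'v set \<Rightarrow> 'v set \<Rightarrow> nat" where
  "setdist E X Y = Min {gdist E x y | x y. x \<in> X \<and> y \<in> Y}"

definition opnorm :: "('v::finite,'q::finite) op \<Rightarrow> real" where
  "opnorm M = onorm (\<lambda>v. M *v v)"

definition adjoint :: "('v::finite,'q::finite) op \<Rightarrow> ('v,'q) op" where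
  "adjoint M = (\<chi> i j. cnj (M $ j $ i))"

definition cscale :: "complex \<Rightarrow> ('v::finite,'q::finite) op \<Rightarrow> ('v,'q) op" where
  "cscale c M = (\<chi> i j. c * M $ i $ j)"

fun mpow :: "('v::finite,'q::finite) op \<Rightarrow> nat \<Rightarrow> ('v,'q) op" where
  "mpow M 0 = mat 1"
| "mpow M (Suc n) = M ** mpow M n"

definition mexp :: "('v::finite,'q::finite) op \<Rightarrow> ('v,'q) op" where
  "mexp M = (\<Sum>n. (1 / fact n) *\<^sub>R mpow M n)"

definition commutator :: "('v::finite,'q::finite) op \<Rightarrow> ('v,'q) op \<Rightarrow> ('v,'q) op" where
  "commutator A B = A ** B - B ** A"

text \<open>Embedding A \<mapsto> A \<otimes> 1 of an operator on the sites Z: the matrix entries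
  only depend on the restrictions of the configurations to Z, and the operator is the
  identity on the complement of Z.\<close>
definition embed :: "'v set \<Rightarrow> (('v \<Rightarrow> 'q) \<Rightarrow> ('v \<Rightarrow> 'q) \<Rightarrow> complex) \<Rightarrow> ('v::finite,'q::finite) op" where
  "embed Z a = (\<chi> \<sigma> \<sigma>'. if (\<forall>x. x \<notin> Z \<longrightarrow> \<sigma> x = \<sigma>' x)
                          then a (restrict \<sigma> Z) (restrict \<sigma>' Z) else 0)"

definition local_alg :: "'v set \<Rightarrow> ('v::finite,'q::finite) op set" where
  "local_alg Z = range (embed Z)"

definition interaction :: "('v set \<Rightarrow> ('v::finite,'q::finite) op) \<Rightarrow> bool" where
  "interaction \<Psi> \<longleftrightarrow> (\<forall>Z. \<Psi> Z \<in> local_alg Z \<and> adjoint (\<Psi> Z) = \<Psi> Z)"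

definition commuting :: "('v set \<Rightarrow> ('v::finite,'q::finite) op) \<Rightarrow> bool" where
  "commuting \<Psi> \<longleftrightarrow> (\<forall>Z Z'. \<Psi> Z ** \<Psi> Z' = \<Psi> Z' ** \<Psi> Z)"

definition F_alpha :: "real \<Rightarrow> real \<Rightarrow> real" where
  "F_alpha \<alpha> r = (1 + r) powr (- \<alpha>)"

definition interaction_norm ::
  "('v \<Rightarrow> 'v \<Rightarrow> bool) \<Rightarrow> (real \<Rightarrow> real) \<Rightarrow> ('v set \<Rightarrow> ('v::finite,'q::finite) op) \<Rightarrow> real" where
  "interaction_norm E F \<Psi> =
     (SUP xy \<in> (UNIV :: ('v \<times> 'v) set).
        (\<Sum>Z \<in> {Z. fst xy \<in> Z \<and> snd xy \<in> Z}. opnorm (\<Psi> Z)) / F (real (gdist E (fst xy) (snd xy))))"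

definition hamiltonian :: "('v set \<Rightarrow> ('v::finite,'q::finite) op) \<Rightarrow> ('v,'q) op" where
  "hamiltonian \<Psi> = (\<Sum>Z \<in> (UNIV :: 'v set set). \<Psi> Z)"

definition dynamics :: "('v set \<Rightarrow> ('v::finite,'q::finite) op) \<Rightarrow> real \<Rightarrow> ('v,'q) op \<Rightarrow> ('v,'q) op" where
  "dynamics \<Psi> t A = mexp (cscale (\<i> * t) (hamiltonian \<Psi>)) ** A
                      ** mexp (cscale (- \<i> * t) (hamiltonian \<Psi>))"

end

theory Submission
  imports Defs
begin

typedef (overloaded) 'a endo = "UNIV :: ('a::{banach,perfect_space} \<Rightarrow>\<^sub>L 'a) set" by auto

setup_lifting type_definition_endo

instantiation endo :: ("{banach,perfect_space}") real_normed_algebra_1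
begin
lift_definition zero_endo :: "'a endo" is 0 .
lift_definition one_endo :: "'a endo" is id_blinfun .
lift_definition plus_endo :: "'a endo \<Rightarrow> 'a endo \<Rightarrow> 'a endo" is "(+)" .
lift_definition minus_endo :: "'a endo \<Rightarrow> 'a endo \<Rightarrow> 'a endo" is "(-)" .
lift_definition uminus_endo :: "'a endo \<Rightarrow> 'a endo" is "uminus" .
lift_definition times_endo :: "'a endo \<Rightarrow> 'a endo \<Rightarrow> 'a endo" is "(o\<^sub>L)" .
lift_definition scaleR_endo :: "real \<Rightarrow> 'a endo \<Rightarrow> 'a endo" is "scaleR" .
lift_definition norm_endo :: "'a endo \<Rightarrow> real" is norm .
definition dist_endo :: "'a endo \<Rightarrow> 'a endo \<Rightarrow> real" where "dist_endo a b = norm (a - b)"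
definition sgn_endo :: "'a endo \<Rightarrow> 'a endo" where "sgn_endo x = scaleR (inverse (norm x)) x"
definition uniformity_endo :: "('a endo \<times> 'a endo) filter" where
  "uniformity_endo = (INF e\<in>{0 <..}. principal {(x, y). dist x y < e})"
definition open_endo :: "'a endo set \<Rightarrow> bool" where
  "open_endo S = (\<forall>x\<in>S. \<forall>\<^sub>F (x', y) in uniformity. x' = x \<longrightarrow> y \<in> S)"
instance
proof
  fix a b c :: "'a endo" and r s :: real
  show "a * b * c = a * (b * c)" by transfer (rule blinfun_eqI, simp)
  show "(a + b) * c = a * c + b * c" by transfer (rule blinfun_eqI, simp add: blinfun.bilinear_simps)
  show "a * (b + c) = a * b + a * c" by transfer (rule blinfun_eqI, simp add: blinfun.bilinear_simps)
  show "r *\<^sub>R a * b = r *\<^sub>R (a * b)" by transfer (rule blinfun_eqI, simp add: blinfun.bilinear_simps)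
  show "a * r *\<^sub>R b = r *\<^sub>R (a * b)" by transfer (rule blinfun_eqI, simp add: blinfun.bilinear_simps)
  show "1 * a = a" by transfer (rule blinfun_eqI, simp)
  show "a * 1 = a" by transfer (rule blinfun_eqI, simp)
  show "(0::'a endo) \<noteq> 1" by transfer (metis norm_blinfun_id norm_zero zero_neq_one)
  show "norm (a * b) \<le> norm a * norm b" by transfer (rule norm_blinfun_compose)
  show "norm (1::'a endo) = 1" by transfer simp
  show "a + b + c = a + (b + c)" by transfer simp
  show "a + b = b + a" by transfer simp
  show "0 + a = a" by transfer simp
  show "- a + a = 0" by transfer simp
  show "a - b = a + - b" by transfer simp
  show "r *\<^sub>R (a + b) = r *\<^sub>R a + r *\<^sub>R b" by transfer (simp add: scaleR_add_right)
  show "(r + s) *\<^sub>R a = r *\<^sub>R a + s *\<^sub>R a" by transfer (simp add: scaleR_add_left)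
  show "r *\<^sub>R s *\<^sub>R a = (r * s) *\<^sub>R a" by transfer simp
  show "1 *\<^sub>R a = a" by transfer simp
  show "sgn a = inverse (norm a) *\<^sub>R a" by (simp add: sgn_endo_def)
  show "dist a b = norm (a - b)" by (simp add: dist_endo_def)
  show "(uniformity :: ('a endo \<times> 'a endo) filter) = (INF e\<in>{0 <..}. principal {(x, y). dist x y < e})"
    by (simp add: uniformity_endo_def)
  show "norm a = 0 \<longleftrightarrow> a = 0" by transfer simp
  show "norm (a + b) \<le> norm a + norm b" by transfer (rule norm_triangle_ineq)
  show "norm (r *\<^sub>R a) = \<bar>r\<bar> * norm a" by transfer simp
next
  fix U :: "'a endo set"
  show "open U = (\<forall>x\<in>U. \<forall>\<^sub>F (x', y) in uniformity. x' = x \<longrightarrow> y \<in> U)"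
    by (simp add: open_endo_def)
qed
end

lemma norm_endo_Rep: "norm x = norm (Rep_endo x)" by transfer simp
lemma Rep_endo_diff: "Rep_endo (x - y) = Rep_endo x - Rep_endo y" by transfer simp

instance endo :: ("{banach,perfect_space}") banach
proof
  fix X :: "nat \<Rightarrow> 'a endo"
  assume "Cauchy X"
  then have "Cauchy (\<lambda>n. Rep_endo (X n))"
    unfolding Cauchy_def dist_norm by (simp add: norm_endo_Rep Rep_endo_diff)
  then obtain L where L: "(\<lambda>n. Rep_endo (X n)) \<longlonglongrightarrow> L"
    using convergent_def Cauchy_convergent_iff by blast
  have "X \<longlonglongrightarrow> Abs_endo L"
    using L unfolding LIMSEQ_def dist_norm
    by (simp add: norm_endo_Rep Rep_endo_diff Abs_endo_inverse)
  then show "convergent X" by (auto simp: convergent_def)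
qed

definition Phi :: "('v::finite,'q::finite) op \<Rightarrow> (complex ^ ('v \<Rightarrow> 'q)) endo" where
  "Phi M = Abs_endo (Blinfun (\<lambda>v. M *v v))"

lemma Phi_apply: "blinfun_apply (Rep_endo (Phi M)) v = M *v v"
  unfolding Phi_def by (simp add: Abs_endo_inverse bounded_linear_Blinfun_apply)

lemma Phi_eqI: "(\<And>v. blinfun_apply (Rep_endo x) v = blinfun_apply (Rep_endo y) v) \<Longrightarrow> x = y"
  by (metis Rep_endo_inject blinfun_eqI)

lemma Phi_mult: "Phi (M ** N) = Phi M * Phi N"
  by (rule Phi_eqI) (simp add: Phi_apply times_endo.rep_eq matrix_vector_mul_assoc)

lemma Phi_one: "Phi (mat 1) = 1"
  by (rule Phi_eqI) (simp add: Phi_apply one_endo.rep_eq)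

lemma Phi_add: "Phi (M + N) = Phi M + Phi N"
  by (rule Phi_eqI) (simp add: Phi_apply plus_endo.rep_eq blinfun.bilinear_simps matrix_vector_mult_add_rdistrib)

lemma Phi_scaleR: "Phi (r *\<^sub>R M) = r *\<^sub>R Phi M"
  by (rule Phi_eqI) (simp add: Phi_apply scaleR_endo.rep_eq blinfun.bilinear_simps vec_eq_iff matrix_vector_mult_def
        scaleR_sum_right)

lemma Phi_diff: "Phi (M - N) = Phi M - Phi N"
  by (rule Phi_eqI) (simp add: Phi_apply minus_endo.rep_eq blinfun.bilinear_simps vec_eq_iff matrix_vector_mult_def
       sum_subtractf algebra_simps)

lemma Phi_uminus: "Phi (- M) = - Phi M"
  using Phi_diff[of 0 M] Phi_diff[of 0 0] by simp

lemma Phi_zero: "Phi 0 = 0"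
  using Phi_diff[of 0 0] by simp

lemma Phi_sum: "Phi (sum f S) = (\<Sum>x\<in>S. Phi (f x))"
  by (induction S rule: infinite_finite_induct) (auto simp: Phi_zero Phi_add)

lemma Phi_inj: "Phi M = Phi N \<Longrightarrow> M = N"
proof -
  assume "Phi M = Phi N"
  then have "\<And>v. M *v v = N *v v" by (metis Phi_apply)
  then show "M = N" by (metis matrix_eq)
qed

lemma norm_Phi: "norm (Phi M) = opnorm M"
  by (simp add: norm_endo.rep_eq norm_blinfun.rep_eq opnorm_def Phi_def Abs_endo_inverse
      bounded_linear_Blinfun_apply)

lemma Phi_mpow: "Phi (mpow M n) = Phi M ^ n"
  by (induction n) (simp_all add: Phi_one Phi_mult)

lemma linear_Phi: "bounded_linear Phi"
  unfolding linear_conv_bounded_linear[symmetric]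
  by (rule linearI) (simp_all add: Phi_add Phi_scaleR)

lemma norm_axis_c: "norm (axis j (1::complex)) = 1"
proof -
  have "(\<Sum>i\<in>UNIV. (norm (axis j (1::complex) $ i))^2) = (\<Sum>i\<in>UNIV. if i = j then 1 else 0)"
    by (rule sum.cong) (auto simp: axis_def)
  then show ?thesis unfolding norm_vec_def L2_set_def by simp
qed

lemma entry_le_opnorm: "norm (M $ i $ j) \<le> opnorm M"
proof -
  have "M $ i $ j = (M *v axis j 1) $ i"
    by (simp add: matrix_vector_mult_def axis_def if_distrib cong: if_cong)
  also have "norm \<dots> \<le> norm (M *v axis j 1)" by (rule Finite_Cartesian_Product.norm_nth_le)
  also have "\<dots> \<le> opnorm M * norm (axis j (1::complex))"
    unfolding opnorm_def by (rule onorm) simp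
  finally show ?thesis by (simp add: norm_axis_c)
qed

lemma norm_vec_le_sum: "norm (x :: 'a::real_normed_vector ^ 'n) \<le> (\<Sum>i\<in>UNIV. norm (x $ i))"
  unfolding norm_vec_def by (rule L2_set_le_sum) simp

lemma norm_le_opnorm: "norm (M :: ('v::finite,'q::finite) op) \<le> real (CARD('v\<Rightarrow>'q))^2 * opnorm M"
proof -
  have "norm M \<le> (\<Sum>i\<in>UNIV. norm (M $ i))" by (rule norm_vec_le_sum)
  also have "\<dots> \<le> (\<Sum>i\<in>(UNIV::('v\<Rightarrow>'q) set). (\<Sum>j\<in>(UNIV::('v\<Rightarrow>'q) set). opnorm M))"
    by (intro sum_mono order_trans[OF norm_vec_le_sum] entry_le_opnorm)
  also have "\<dots> = real (CARD('v\<Rightarrow>'q))^2 * opnorm M" by (simp add: power2_eq_square)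
  finally show ?thesis .
qed

lemma summable_mexp: "summable (\<lambda>n. (1 / fact n) *\<^sub>R mpow (M::('v::finite,'q::finite) op) n)"
proof (rule summable_comparison_test')
  let ?C = "real (CARD('v\<Rightarrow>'q))^2"
  show "summable (\<lambda>n. ?C * (opnorm M ^ n /\<^sub>R fact n))"
    by (intro summable_mult summable_exp_generic)
  fix n
  have "norm ((1 / fact n) *\<^sub>R mpow M n) = (1 / fact n) * norm (mpow M n)" by simp
  also have "\<dots> \<le> (1 / fact n) * (?C * opnorm (mpow M n))"
    by (intro mult_left_mono norm_le_opnorm) simp
  also have "opnorm (mpow M n) \<le> opnorm M ^ n"
    by (metis Phi_mpow norm_Phi norm_power_ineq)
  then have "(1 / fact n) * (?C * opnorm (mpow M n)) \<le> (1 / fact n) * (?C * opnorm M ^ n)"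
    by (intro mult_left_mono) auto
  finally show "norm ((1 / fact n) *\<^sub>R mpow M n) \<le> ?C * (opnorm M ^ n /\<^sub>R fact n)"
    by (simp add: field_simps)
qed

lemma Phi_mexp: "Phi (mexp M) = exp (Phi M)"
proof -
  have "Phi (mexp M) = (\<Sum>n. Phi ((1 / fact n) *\<^sub>R mpow M n))"
    unfolding mexp_def by (rule bounded_linear.suminf[OF linear_Phi summable_mexp])
  also have "\<dots> = (\<Sum>n. Phi M ^ n /\<^sub>R fact n)"
    by (simp add: Phi_scaleR Phi_mpow divide_inverse_commute)
  finally show ?thesis by (simp add: exp_def)
qed

lemma adjoint_mult: "adjoint (M ** N) = adjoint N ** adjoint M"
  by (simp add: adjoint_def matrix_matrix_mult_def vec_eq_iff mult.commute)

lemma adjoint_one: "adjoint (mat 1 :: ('v::finite,'q::finite) op) = mat 1"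
  by (simp add: adjoint_def mat_def vec_eq_iff)

lemma mpow_commute: "mpow M n ** M = M ** mpow M n"
  by (induction n) (simp_all add: matrix_mul_assoc[symmetric])

lemma adjoint_mpow: "adjoint (mpow M n) = mpow (adjoint M) n"
  by (induction n) (simp_all add: adjoint_one adjoint_mult mpow_commute)

lemma cplx_scaleR: "r *\<^sub>R (z::complex) = of_real r * z"
  by (simp add: scaleR_conv_of_real)

lemma linear_adjoint: "bounded_linear (adjoint :: ('v::finite,'q::finite) op \<Rightarrow> _)"
  unfolding linear_conv_bounded_linear[symmetric]
  by (rule linearI) (simp_all add: adjoint_def vec_eq_iff cplx_scaleR)

lemma adjoint_scaleR: "adjoint (r *\<^sub>R M) = r *\<^sub>R adjoint M"
  by (simp add: adjoint_def vec_eq_iff cplx_scaleR)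

lemma adjoint_mexp: "adjoint (mexp M) = mexp (adjoint M)"
proof -
  have "adjoint (mexp M) = (\<Sum>n. adjoint ((1 / fact n) *\<^sub>R mpow M n))"
    unfolding mexp_def by (rule bounded_linear.suminf[OF linear_adjoint summable_mexp])
  also have "\<dots> = (\<Sum>n. (1 / fact n) *\<^sub>R mpow (adjoint M) n)"
    by (simp add: adjoint_scaleR adjoint_mpow)
  finally show ?thesis by (simp add: mexp_def)
qed

lemma adjoint_cscale: "adjoint (cscale c M) = cscale (cnj c) (adjoint M)"
  by (simp add: adjoint_def cscale_def vec_eq_iff)

lemma cscale_scaleR: "cscale (of_real r * c) M = r *\<^sub>R cscale c M"
  by (simp add: cscale_def vec_eq_iff cplx_scaleR)

lemma cscale_minus: "cscale (- c) M = - cscale c M"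
  by (simp add: cscale_def vec_eq_iff)

definition cdot :: "complex ^ 'n \<Rightarrow> complex ^ 'n \<Rightarrow> complex" where
  "cdot x y = (\<Sum>i\<in>UNIV. cnj (x $ i) * y $ i)"

lemma cdot_adjoint: "cdot (M *v x) y = cdot x (adjoint M *v y)"
proof -
  have "cdot (M *v x) y = (\<Sum>i\<in>UNIV. \<Sum>j\<in>UNIV. cnj (x$j) * (cnj (M$i$j) * y$i))"
    unfolding cdot_def matrix_vector_mult_def
    by (simp add: cnj_sum sum_distrib_left sum_distrib_right mult.commute mult.left_commute)
  also have "\<dots> = (\<Sum>j\<in>UNIV. \<Sum>i\<in>UNIV. cnj (x$j) * (cnj (M$i$j) * y$i))"
    by (rule sum.swap)
  also have "\<dots> = cdot x (adjoint M *v y)"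
    unfolding cdot_def matrix_vector_mult_def adjoint_def
    by (simp add: sum_distrib_left)
  finally show ?thesis .
qed

lemma cdot_self: "cdot x x = of_real ((norm x)^2)"
proof -
  have "(norm x)^2 = (\<Sum>i\<in>UNIV. (norm (x $ i))^2)"
    unfolding norm_vec_def L2_set_def by (simp add: sum_nonneg)
  then have "of_real ((norm x)^2) = (\<Sum>i\<in>UNIV. of_real ((norm (x $ i))^2) :: complex)" by simp
  also have "\<dots> = cdot x x" unfolding cdot_def complex_norm_square by (simp add: mult.commute)
  finally show ?thesis by simp
qed

lemma unitary_norm:
  assumes "adjoint U ** U = mat 1"
  shows "norm (U *v x) = norm x"
proof -
  have "cdot (U *v x) (U *v x) = cdot x x"
    by (simp add: cdot_adjoint matrix_vector_mul_assoc assms)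
  then have "complex_of_real ((norm (U *v x))^2) = complex_of_real ((norm x)^2)"
    by (simp only: cdot_self)
  then have "(norm (U *v x))^2 = (norm x)^2" using of_real_eq_iff by blast
  then show ?thesis by (simp add: power2_eq_iff_nonneg)
qed

lemma unitary_opnorm:
  assumes "adjoint U ** U = mat 1"
  shows "opnorm U \<le> 1"
  unfolding opnorm_def by (rule onorm_le) (simp add: unitary_norm[OF assms])

lemma norm_exp_unitary:
  assumes "adjoint H = H"
  shows "norm (exp (s *\<^sub>R Phi (cscale \<i> H))) \<le> 1"
proof -
  let ?K = "cscale (of_real s * \<i>) H"
  have eq: "s *\<^sub>R Phi (cscale \<i> H) = Phi ?K"
    by (simp add: Phi_scaleR cscale_scaleR)
  have adjK: "adjoint ?K = - ?K"
    by (simp add: adjoint_cscale assms cscale_minus[symmetric])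
  have "Phi (adjoint (mexp ?K) ** mexp ?K) = 1"
    by (simp add: adjoint_mexp adjK Phi_mult Phi_mexp Phi_uminus exp_minus_inverse
       exp_add_commuting[symmetric])
  then have "adjoint (mexp ?K) ** mexp ?K = mat 1"
    by (metis Phi_inj Phi_one)
  then have "opnorm (mexp ?K) \<le> 1" by (rule unitary_opnorm)
  then show ?thesis by (simp add: eq Phi_mexp[symmetric] norm_Phi)
qed

lemma comm_exp:
  fixes x y :: "'a::{real_normed_algebra_1,banach}"
  assumes "x * y = y * x"
  shows "x * exp y = exp y * x"
proof -
  have s: "summable (\<lambda>n. y ^ n /\<^sub>R fact n)" by (rule summable_exp_generic)
  have "x * exp y = (\<Sum>n. x * (y ^ n /\<^sub>R fact n))"
    unfolding exp_def by (rule suminf_mult[OF s, symmetric])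
  also have "\<dots> = (\<Sum>n. (y ^ n /\<^sub>R fact n) * x)"
    using power_commuting_commutes[OF assms[symmetric]] by simp
  also have "\<dots> = exp y * x"
    unfolding exp_def by (rule suminf_mult2[OF s, symmetric])
  finally show ?thesis .
qed

lemma conj_bound:
  fixes K c :: "'a::{real_normed_algebra_1,banach}"
  assumes u: "\<And>s. norm (exp (s *\<^sub>R K)) \<le> 1"
  shows "norm (exp (t *\<^sub>R K) * c * exp ((- t) *\<^sub>R K) - c) \<le> 2 * norm K * norm c * \<bar>t\<bar>"
proof -
  define f where "f s = exp (s *\<^sub>R K) * c * exp (s *\<^sub>R (- K))" for s
  define g where "g s = exp (s *\<^sub>R K) * (K * c - c * K) * exp (s *\<^sub>R (- K))" for s
  have cK: "exp (- (s *\<^sub>R K)) * K = K * exp (- (s *\<^sub>R K))" for s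
    by (rule comm_exp[symmetric]) simp
  have d: "(f has_vector_derivative g s) (at s within UNIV)" for s
  proof -
    have "(f has_vector_derivative
        (exp (s *\<^sub>R K) * c * (exp (s *\<^sub>R (- K)) * (- K)) + exp (s *\<^sub>R K) * K * c * exp (s *\<^sub>R (- K))))
        (at s within UNIV)"
    proof -
      have h1: "((\<lambda>x. exp (x *\<^sub>R K) * c) has_vector_derivative exp (s *\<^sub>R K) * K * c) (at s within UNIV)"
        using has_vector_derivative_mult[OF exp_scaleR_has_vector_derivative_right[of K s UNIV]
            has_vector_derivative_const[of c]] by simp
      show ?thesis
        using has_vector_derivative_mult[OF h1 exp_scaleR_has_vector_derivative_right[of "- K" s UNIV]]
        unfolding f_def by (simp add: algebra_simps)
    qed
    also have "exp (s *\<^sub>R K) * c * (exp (s *\<^sub>R (- K)) * (- K)) + exp (s *\<^sub>R K) * K * c * exp (s *\<^sub>R (- K))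
        = g s"
      unfolding g_def by (simp add: cK algebra_simps)
    finally show ?thesis .
  qed
  have gb: "norm (g s) \<le> 2 * norm K * norm c" for s
  proof -
    have "norm (g s) \<le> norm (exp (s *\<^sub>R K) * (K * c - c * K)) * norm (exp (s *\<^sub>R (- K)))"
      unfolding g_def by (rule norm_mult_ineq)
    also have "\<dots> \<le> norm (exp (s *\<^sub>R K)) * norm (K * c - c * K) * norm (exp (s *\<^sub>R (- K)))"
      by (intro mult_right_mono norm_mult_ineq norm_ge_zero)
    also have "\<dots> \<le> 1 * norm (K * c - c * K) * 1"
      using u[of s] u[of "-s"]
      by (intro mult_mono) auto
    also have "norm (K * c - c * K) \<le> norm (K * c) + norm (c * K)" by (rule norm_triangle_ineq4)
    also have "\<dots> \<le> norm K * norm c + norm c * norm K" by (intro add_mono norm_mult_ineq)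
    finally show ?thesis by simp
  qed
  have "norm (f t - f 0) \<le> (2 * norm K * norm c) * norm (t - 0)"
  proof (rule differentiable_bound[where S = UNIV and f' = "\<lambda>s h. h *\<^sub>R g s"])
    show "convex (UNIV :: real set)" by simp
    fix s :: real
    show "(f has_derivative (\<lambda>h. h *\<^sub>R g s)) (at s within UNIV)"
      using d[of s] by (simp add: has_vector_derivative_def)
    show "onorm (\<lambda>h. h *\<^sub>R g s) \<le> 2 * norm K * norm c"
    proof (rule onorm_le)
      fix h :: real
      have "\<bar>h\<bar> * norm (g s) \<le> \<bar>h\<bar> * (2 * norm K * norm c)"
        by (rule mult_left_mono[OF gb]) simp
      then show "norm (h *\<^sub>R g s) \<le> 2 * norm K * norm c * norm h"
        by (simp add: mult.commute)
    qed
  qed auto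
  then show ?thesis by (simp add: f_def)
qed

lemma embed_mult_disj:
  fixes a b :: "('v::finite \<Rightarrow> 'q::finite) \<Rightarrow> ('v \<Rightarrow> 'q) \<Rightarrow> complex"
  assumes ZW: "Z \<inter> W = {}"
  shows "(embed Z a ** embed W b) $ \<sigma> $ \<tau> =
    (if (\<forall>x. x \<notin> Z \<and> x \<notin> W \<longrightarrow> \<sigma> x = \<tau> x)
     then a (restrict \<sigma> Z) (restrict \<tau> Z) * b (restrict \<sigma> W) (restrict \<tau> W) else 0)"
proof -
  define T where "T \<rho> = (if (\<forall>x. x \<notin> Z \<longrightarrow> \<sigma> x = \<rho> x) then a (restrict \<sigma> Z) (restrict \<rho> Z) else 0)
      * (if (\<forall>x. x \<notin> W \<longrightarrow> \<rho> x = \<tau> x) then b (restrict \<rho> W) (restrict \<tau> W) else 0)" for \<rho>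
  have lhs: "(embed Z a ** embed W b) $ \<sigma> $ \<tau> = (\<Sum>\<rho>\<in>UNIV. T \<rho>)"
    by (simp add: matrix_matrix_mult_def embed_def T_def)
  show ?thesis
  proof (cases "\<forall>x. x \<notin> Z \<and> x \<notin> W \<longrightarrow> \<sigma> x = \<tau> x")
    case True
    define \<rho>0 where "\<rho>0 = (\<lambda>x. if x \<in> Z then \<tau> x else \<sigma> x)"
    have r1: "restrict \<rho>0 Z = restrict \<tau> Z" by (auto simp: \<rho>0_def restrict_def)
    have r2: "restrict \<rho>0 W = restrict \<sigma> W" using ZW by (auto simp: \<rho>0_def restrict_def fun_eq_iff)
    have "T \<rho> = (if \<rho> = \<rho>0 then a (restrict \<sigma> Z) (restrict \<tau> Z) * b (restrict \<sigma> W) (restrict \<tau> W) else 0)"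
      for \<rho>
    proof (cases "\<rho> = \<rho>0")
      case True
      have "\<forall>x. x \<notin> Z \<longrightarrow> \<sigma> x = \<rho>0 x" by (simp add: \<rho>0_def)
      moreover have "\<forall>x. x \<notin> W \<longrightarrow> \<rho>0 x = \<tau> x"
        using \<open>\<forall>x. x \<notin> Z \<and> x \<notin> W \<longrightarrow> \<sigma> x = \<tau> x\<close> by (simp add: \<rho>0_def)
      ultimately show ?thesis using True by (simp add: T_def r1 r2)
    next
      case False
      have "\<not> ((\<forall>x. x \<notin> Z \<longrightarrow> \<sigma> x = \<rho> x) \<and> (\<forall>x. x \<notin> W \<longrightarrow> \<rho> x = \<tau> x))"
      proof
        assume h: "(\<forall>x. x \<notin> Z \<longrightarrow> \<sigma> x = \<rho> x) \<and> (\<forall>x. x \<notin> W \<longrightarrow> \<rho> x = \<tau> x)"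
        have "\<rho> = \<rho>0"
        proof
          fix x show "\<rho> x = \<rho>0 x"
            using h ZW by (cases "x \<in> Z") (auto simp: \<rho>0_def)
        qed
        with False show False by simp
      qed
      then show ?thesis using False by (auto simp: T_def)
    qed
    then have "(\<Sum>\<rho>\<in>UNIV. T \<rho>) = a (restrict \<sigma> Z) (restrict \<tau> Z) * b (restrict \<sigma> W) (restrict \<tau> W)"
      by simp
    then show ?thesis using lhs True by simp
  next
    case False
    have "T \<rho> = 0" for \<rho>
    proof -
      have "\<not> ((\<forall>x. x \<notin> Z \<longrightarrow> \<sigma> x = \<rho> x) \<and> (\<forall>x. x \<notin> W \<longrightarrow> \<rho> x = \<tau> x))"
        using False by metis
      then show ?thesis by (auto simp: T_def)
    qed
    then show ?thesis using lhs False by auto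
  qed
qed

lemma embed_commute:
  fixes a b :: "('v::finite \<Rightarrow> 'q::finite) \<Rightarrow> ('v \<Rightarrow> 'q) \<Rightarrow> complex"
  assumes "Z \<inter> W = {}"
  shows "embed Z a ** embed W b = embed W b ** embed Z a"
proof -
  have ZW: "W \<inter> Z = {}" using assms by blast
  show ?thesis
  proof (intro vec_eq_iff[THEN iffD2] allI)
    fix \<sigma> \<tau> :: "'v \<Rightarrow> 'q"
    have c: "(\<forall>x. x \<notin> Z \<and> x \<notin> W \<longrightarrow> \<sigma> x = \<tau> x) = (\<forall>x. x \<notin> W \<and> x \<notin> Z \<longrightarrow> \<sigma> x = \<tau> x)"
      by blast
    show "(embed Z a ** embed W b) $ \<sigma> $ \<tau> = (embed W b ** embed Z a) $ \<sigma> $ \<tau>"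
      unfolding embed_mult_disj[OF assms] embed_mult_disj[OF ZW] c by (auto simp: mult.commute)
  qed
qed

lemma local_commute:
  assumes "M \<in> local_alg Z" "N \<in> local_alg W" "Z \<inter> W = {}"
  shows "M ** N = N ** M"
  using assms embed_commute unfolding local_alg_def by blast

lemma comm_exp2:
  fixes x y :: "'a::{real_normed_algebra_1,banach}"
  assumes "x * y = y * x"
  shows "exp x * exp y = exp y * exp x"
proof -
  have "x * exp y = exp y * x" by (rule comm_exp[OF assms])
  then have "exp y * exp x = exp x * exp y" by (rule comm_exp[OF sym])
  then show ?thesis by simp
qed

lemma comm_scale:
  fixes x y :: "'a::{real_normed_algebra_1,banach}"
  assumes "x * y = y * x"
  shows "(r *\<^sub>R x) * (s *\<^sub>R y) = (s *\<^sub>R y) * (r *\<^sub>R x)"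
  using assms by simp

lemma abstract_bound:
  fixes S1 S2 S3 a b :: "'a::{real_normed_algebra_1,banach}"
  assumes c12: "S1 * S2 = S2 * S1" and c13: "S1 * S3 = S3 * S1" and c23: "S2 * S3 = S3 * S2"
    and a3: "a * S3 = S3 * a" and b2: "b * S2 = S2 * b" and ab: "a * b = b * a"
    and u1: "\<And>s. norm (exp (s *\<^sub>R S1)) \<le> 1" and u2: "\<And>s. norm (exp (s *\<^sub>R S2)) \<le> 1"
  shows "norm ((exp (t *\<^sub>R (S1 + S2 + S3)) * a * exp ((- t) *\<^sub>R (S1 + S2 + S3))) * b
           - b * (exp (t *\<^sub>R (S1 + S2 + S3)) * a * exp ((- t) *\<^sub>R (S1 + S2 + S3))))
         \<le> 4 * norm S1 * norm a * norm b * \<bar>t\<bar>"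
proof -
  have split: "exp (s *\<^sub>R (S1 + S2 + S3)) = exp (s *\<^sub>R S1) * exp (s *\<^sub>R S2) * exp (s *\<^sub>R S3)" for s
  proof -
    have "exp (s *\<^sub>R (S1 + S2 + S3)) = exp ((s *\<^sub>R S1 + s *\<^sub>R S2) + s *\<^sub>R S3)"
      by (simp add: scaleR_add_right)
    also have "\<dots> = exp (s *\<^sub>R S1 + s *\<^sub>R S2) * exp (s *\<^sub>R S3)"
      by (rule exp_add_commuting) (simp add: algebra_simps c13 c23)
    also have "exp (s *\<^sub>R S1 + s *\<^sub>R S2) = exp (s *\<^sub>R S1) * exp (s *\<^sub>R S2)"
      by (rule exp_add_commuting) (simp add: c12)
    finally show ?thesis .
  qed
  define U where "U = exp (t *\<^sub>R S1)"
  define U' where "U' = exp ((- t) *\<^sub>R S1)"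
  define V where "V = exp (t *\<^sub>R S2)"
  define V' where "V' = exp ((- t) *\<^sub>R S2)"
  define W where "W = exp (t *\<^sub>R S3)"
  define W' where "W' = exp ((- t) *\<^sub>R S3)"
  have e1: "U' * V' = V' * U'" unfolding U'_def V'_def by (rule comm_exp2) (simp add: c12)
  have e2: "U' * W' = W' * U'" unfolding U'_def W'_def by (rule comm_exp2) (simp add: c13)
  have e3: "V' * W' = W' * V'" unfolding V'_def W'_def by (rule comm_exp2) (simp add: c23)
  have ww: "W * W' = 1" unfolding W_def W'_def using exp_minus_inverse[of "t *\<^sub>R S3"] by simp
  have aW: "W * a = a * W" unfolding W_def by (rule comm_exp[symmetric]) (simp add: a3)
  have waw: "W * a * W' = a" by (simp add: aW mult.assoc ww)
  have "U' * V' * W' = W' * (V' * U')"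
    by (metis e1 e2 e3 mult.assoc)
  define a' where "a' = V * a * V'"
  have D: "exp (t *\<^sub>R (S1 + S2 + S3)) * a * exp ((- t) *\<^sub>R (S1 + S2 + S3)) = U * a' * U'"
  proof -
    have "exp (t *\<^sub>R (S1 + S2 + S3)) * a * exp ((- t) *\<^sub>R (S1 + S2 + S3))
        = U * V * W * a * (U' * V' * W')"
      unfolding split U_def V_def W_def U'_def V'_def W'_def ..
    also have "U' * V' * W' = W' * (V' * U')" by (metis e1 e2 e3 mult.assoc)
    also have "U * V * W * a * (W' * (V' * U')) = U * (V * (W * a * W') * V') * U'"
      by (simp add: mult.assoc)
    finally show ?thesis by (simp add: waw a'_def)
  qed
  have bV: "b * V = V * b" unfolding V_def by (rule comm_exp) (simp add: b2)
  have bV': "b * V' = V' * b" unfolding V'_def by (rule comm_exp) (simp add: b2)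
  have a'b: "a' * b = b * a'"
  proof -
    have "V * a * V' * b = V * a * (b * V')" by (simp add: mult.assoc bV')
    also have "\<dots> = V * (a * b) * V'" by (simp add: mult.assoc)
    also have "\<dots> = (V * b) * a * V'" by (simp add: ab mult.assoc)
    also have "\<dots> = b * (V * a * V')" by (simp add: bV[symmetric] mult.assoc)
    finally show ?thesis unfolding a'_def .
  qed
  have na': "norm a' \<le> norm a"
  proof -
    have "norm a' \<le> norm (V * a) * norm V'" unfolding a'_def by (rule norm_mult_ineq)
    also have "\<dots> \<le> norm V * norm a * norm V'" by (intro mult_right_mono norm_mult_ineq) simp
    also have "\<dots> \<le> 1 * norm a * 1"
      using u2[of t] u2[of "-t"] unfolding V_def V'_def by (intro mult_mono) auto
    finally show ?thesis by simp
  qed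
  have cb: "norm (U * a' * U' - a') \<le> 2 * norm S1 * norm a' * \<bar>t\<bar>"
    unfolding U_def U'_def by (rule conj_bound[OF u1])
  let ?X = "U * a' * U'"
  have "?X * b - b * ?X = (?X - a') * b - b * (?X - a')"
    by (simp add: algebra_simps a'b)
  then have "norm (?X * b - b * ?X) \<le> norm ((?X - a') * b) + norm (b * (?X - a'))"
    using norm_triangle_ineq4 by metis
  also have "\<dots> \<le> norm (?X - a') * norm b + norm b * norm (?X - a')"
    by (intro add_mono norm_mult_ineq)
  also have "\<dots> = 2 * norm b * norm (?X - a')" by simp
  also have "\<dots> \<le> 2 * norm b * (2 * norm S1 * norm a' * \<bar>t\<bar>)"
    by (intro mult_left_mono cb) simp
  also have "\<dots> \<le> 2 * norm b * (2 * norm S1 * norm a * \<bar>t\<bar>)"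
    by (intro mult_left_mono mult_right_mono na') auto
  finally show ?thesis unfolding D by (simp add: mult_ac)
qed

lemma cscale_mult_left: "cscale c M ** N = cscale c (M ** N)"
  by (simp add: cscale_def matrix_matrix_mult_def vec_eq_iff sum_distrib_left mult.assoc)

lemma cscale_mult_right: "M ** cscale c N = cscale c (M ** N)"
  by (simp add: cscale_def matrix_matrix_mult_def vec_eq_iff sum_distrib_left mult.left_commute)

lemma cscale_cscale: "cscale c (cscale d M) = cscale (c * d) M"
  by (simp add: cscale_def vec_eq_iff mult.assoc)

lemma cscale_one: "cscale 1 M = M"
  by (simp add: cscale_def vec_eq_iff)

lemma cscale_sum: "cscale c (sum f S) = (\<Sum>z\<in>S. cscale c (f z))"
  by (induction S rule: infinite_finite_induct)
     (auto simp: cscale_def vec_eq_iff distrib_left)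

lemma adjoint_sum: "adjoint (sum f S) = (\<Sum>z\<in>S. adjoint (f z))"
  by (induction S rule: infinite_finite_induct)
     (auto simp: adjoint_def vec_eq_iff)

lemma comm_cscale: "P ** Q = Q ** P \<Longrightarrow> cscale c P ** Q = Q ** cscale c P"
  by (simp add: cscale_mult_left cscale_mult_right)

lemma comm_cscale2: "P ** Q = Q ** P \<Longrightarrow> cscale c P ** cscale d Q = cscale d Q ** cscale c P"
  by (simp add: cscale_mult_left cscale_mult_right cscale_cscale mult.commute)

lemma comm_sum1:
  fixes x :: "'a::ring"
  assumes "\<And>z. z \<in> A \<Longrightarrow> x * f z = f z * x"
  shows "x * sum f A = sum f A * x"
  using assms by (simp add: sum_distrib_left sum_distrib_right)

lemma comm_sums:
  fixes f g :: "_ \<Rightarrow> 'a::ring"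
  assumes "\<And>z w. f z * g w = g w * f z"
  shows "sum f A * sum g B = sum g B * sum f A"
proof -
  have "sum f A * g w = g w * sum f A" for w
    by (rule comm_sum1[symmetric]) (simp add: assms)
  then show ?thesis by (intro comm_sum1) simp
qed

lemma comb_bound:
  fixes n :: "'v::finite set \<Rightarrow> real" and X Y :: "'v set"
  assumes nn: "\<And>Z. n Z \<ge> 0"
  shows "sum n {Z. Z \<inter> X \<noteq> {} \<and> Z \<inter> Y \<noteq> {}}
     \<le> (\<Sum>x\<in>X. \<Sum>y\<in>Y. sum n {Z. x \<in> Z \<and> y \<in> Z})"
proof -
  let ?P = "{Z. Z \<inter> X \<noteq> {} \<and> Z \<inter> Y \<noteq> {}}"
  let ?g = "\<lambda>x y Z. if x \<in> Z \<and> y \<in> Z then n Z else 0"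
  have l: "sum n ?P = (\<Sum>Z\<in>UNIV. if Z \<in> ?P then n Z else 0)"
    by (simp add: sum.If_cases Int_def)
  have r1: "sum n {Z. x \<in> Z \<and> y \<in> Z} = (\<Sum>Z\<in>UNIV. ?g x y Z)" for x y
    by (simp add: sum.If_cases Int_def)
  have r: "(\<Sum>x\<in>X. \<Sum>y\<in>Y. sum n {Z. x \<in> Z \<and> y \<in> Z}) = (\<Sum>Z\<in>UNIV. \<Sum>x\<in>X. \<Sum>y\<in>Y. ?g x y Z)"
    unfolding r1 by (simp add: sum.swap[of _ Y UNIV] sum.swap[of _ X UNIV])
  have "(if Z \<in> ?P then n Z else 0) \<le> (\<Sum>x\<in>X. \<Sum>y\<in>Y. ?g x y Z)" for Z
  proof (cases "Z \<in> ?P")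
    case True
    then obtain x0 y0 where x0: "x0 \<in> Z" "x0 \<in> X" and y0: "y0 \<in> Z" "y0 \<in> Y" by blast
    have "n Z = ?g x0 y0 Z" using x0 y0 by simp
    also have "\<dots> \<le> (\<Sum>y\<in>Y. ?g x0 y Z)"
      by (rule member_le_sum) (use y0 nn in auto)
    also have "\<dots> \<le> (\<Sum>x\<in>X. \<Sum>y\<in>Y. ?g x y Z)"
      by (rule member_le_sum[where f = "\<lambda>x. \<Sum>y\<in>Y. ?g x y Z"]) (use x0 nn in \<open>auto intro: sum_nonneg\<close>)
    finally show ?thesis using True by simp
  next
    case False
    then show ?thesis using nn by (auto intro!: sum_nonneg)
  qed
  then have "(\<Sum>Z\<in>UNIV. if Z \<in> ?P then n Z else 0) \<le> (\<Sum>Z\<in>UNIV. \<Sum>x\<in>X. \<Sum>y\<in>Y. ?g x y Z)"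
    by (rule sum_mono)
  then show ?thesis using l r by simp
qed

theorem theorem3p4:
  fixes E :: "'v::finite \<Rightarrow> 'v \<Rightarrow> bool"
    and \<Psi> :: "'v set \<Rightarrow> ('v, 'q::finite) op"
    and \<alpha> t :: real and X Y :: "'v set" and A B :: "('v, 'q) op"
  assumes "\<alpha> > 0"
    and "connected_graph E"
    and "interaction \<Psi>" and "commuting \<Psi>"
    and "X \<inter> Y = {}"
    and "A \<in> local_alg X" and "B \<in> local_alg Y"
  shows "opnorm (commutator (dynamics \<Psi> t A) B)
           \<le> 4 * interaction_norm E (F_alpha \<alpha>) \<Psi> * opnorm A * opnorm B
               * real (card X) * real (card Y) * \<bar>t\<bar>
               * F_alpha \<alpha> (real (setdist E X Y))"
proof -
  have loc: "\<And>Z. \<Psi> Z \<in> local_alg Z" and sa: "\<And>Z. adjoint (\<Psi> Z) = \<Psi> Z"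
    using assms(3) unfolding interaction_def by auto
  have comPsi: "\<And>Z W. \<Psi> Z ** \<Psi> W = \<Psi> W ** \<Psi> Z"
    using assms(4) unfolding commuting_def by auto
  define k where "k Z = Phi (cscale \<i> (\<Psi> Z))" for Z
  define P1 where "P1 = {Z. Z \<inter> X \<noteq> {} \<and> Z \<inter> Y \<noteq> {}}"
  define P2 where "P2 = {Z. Z \<inter> Y = {}}"
  define P3 where "P3 = {Z. Z \<inter> X = {} \<and> Z \<inter> Y \<noteq> {}}"
  define S1 where "S1 = sum k P1"
  define S2 where "S2 = sum k P2"
  define S3 where "S3 = sum k P3"
  define a where "a = Phi A"
  define b where "b = Phi B"
  have kk: "k Z * k W = k W * k Z" for Z W
    unfolding k_def Phi_mult[symmetric] by (simp add: comm_cscale2 comPsi)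
  have c12: "S1 * S2 = S2 * S1" unfolding S1_def S2_def by (rule comm_sums) (rule kk)
  have c13: "S1 * S3 = S3 * S1" unfolding S1_def S3_def by (rule comm_sums) (rule kk)
  have c23: "S2 * S3 = S3 * S2" unfolding S2_def S3_def by (rule comm_sums) (rule kk)
  have a3: "a * S3 = S3 * a" unfolding S3_def
  proof (rule comm_sum1)
    fix Z assume "Z \<in> P3"
    then have "Z \<inter> X = {}" by (simp add: P3_def)
    then have "\<Psi> Z ** A = A ** \<Psi> Z" using local_commute loc assms(6) by blast
    then show "a * k Z = k Z * a"
      unfolding a_def k_def Phi_mult[symmetric] by (simp add: comm_cscale)
  qed
  have b2: "b * S2 = S2 * b" unfolding S2_def
  proof (rule comm_sum1)
    fix Z assume "Z \<in> P2"
    then have "Z \<inter> Y = {}" by (simp add: P2_def)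
    then have "\<Psi> Z ** B = B ** \<Psi> Z" using local_commute loc assms(7) by blast
    then show "b * k Z = k Z * b"
      unfolding b_def k_def Phi_mult[symmetric] by (simp add: comm_cscale)
  qed
  have ab: "a * b = b * a"
    unfolding a_def b_def Phi_mult[symmetric] using local_commute assms(5-7) by metis
  have Sk: "sum k P = Phi (cscale \<i> (sum \<Psi> P))" for P
    unfolding k_def by (simp add: cscale_sum Phi_sum)
  have saP: "adjoint (sum \<Psi> P) = sum \<Psi> P" for P
    by (simp add: adjoint_sum sa)
  have u1: "norm (exp (s *\<^sub>R S1)) \<le> 1" for s
    unfolding S1_def Sk by (rule norm_exp_unitary[OF saP])
  have u2: "norm (exp (s *\<^sub>R S2)) \<le> 1" for s
    unfolding S2_def Sk by (rule norm_exp_unitary[OF saP])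
  have Ssplit: "sum k UNIV = S1 + S2 + S3"
  proof -
    have "UNIV = (P1 \<union> P2) \<union> P3" by (auto simp: P1_def P2_def P3_def)
    moreover have "sum k ((P1 \<union> P2) \<union> P3) = sum k (P1 \<union> P2) + S3"
      unfolding S3_def by (rule sum.union_disjoint) (auto simp: P1_def P2_def P3_def)
    moreover have "sum k (P1 \<union> P2) = S1 + S2"
      unfolding S1_def S2_def by (rule sum.union_disjoint) (auto simp: P1_def P2_def)
    ultimately show ?thesis by simp
  qed
  have H: "Phi (cscale c (hamiltonian \<Psi>)) = Phi (cscale c (sum \<Psi> UNIV))" for c
    by (simp add: hamiltonian_def)
  have Hp: "Phi (cscale (\<i> * complex_of_real t) (hamiltonian \<Psi>)) = t *\<^sub>R (S1 + S2 + S3)"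
  proof -
    have "cscale (\<i> * complex_of_real t) (sum \<Psi> UNIV) = t *\<^sub>R cscale \<i> (sum \<Psi> UNIV)"
      by (simp add: cscale_scaleR[symmetric] mult.commute)
    then show ?thesis unfolding H by (simp add: Phi_scaleR Sk[symmetric] Ssplit)
  qed
  have Hm: "Phi (cscale (- \<i> * complex_of_real t) (hamiltonian \<Psi>)) = (- t) *\<^sub>R (S1 + S2 + S3)"
  proof -
    have "cscale (- \<i> * complex_of_real t) (sum \<Psi> UNIV) = (- t) *\<^sub>R cscale \<i> (sum \<Psi> UNIV)"
      by (simp add: cscale_scaleR[symmetric] mult.commute)
    then show ?thesis unfolding H by (simp add: Phi_scaleR Phi_uminus Sk[symmetric] Ssplit)
  qed
  have PD: "Phi (dynamics \<Psi> t A) = exp (t *\<^sub>R (S1 + S2 + S3)) * a * exp ((- t) *\<^sub>R (S1 + S2 + S3))"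
    unfolding dynamics_def a_def Phi_mult Phi_mexp Hp Hm by simp
  have L: "opnorm (commutator (dynamics \<Psi> t A) B) = norm (Phi (dynamics \<Psi> t A) * b - b * Phi (dynamics \<Psi> t A))"
    unfolding commutator_def b_def by (simp add: norm_Phi[symmetric] Phi_diff Phi_mult)
  have main: "opnorm (commutator (dynamics \<Psi> t A) B) \<le> 4 * norm S1 * norm a * norm b * \<bar>t\<bar>"
    unfolding L PD by (rule abstract_bound[OF c12 c13 c23 a3 b2 ab u1 u2])
  define n where "n Z = opnorm (\<Psi> Z)" for Z
  have nn: "n Z \<ge> 0" for Z unfolding n_def norm_Phi[symmetric] by simp
  have J: "norm (Phi (cscale \<i> (mat 1 :: ('v,'q) op))) \<le> 1"
  proof -
    have "adjoint (cscale \<i> (mat 1 :: ('v,'q) op)) ** cscale \<i> (mat 1) = mat 1"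
      by (simp add: adjoint_cscale adjoint_one cscale_mult_left cscale_mult_right cscale_cscale cscale_one)
    then show ?thesis unfolding norm_Phi by (rule unitary_opnorm)
  qed
  have nk: "norm (k Z) \<le> n Z" for Z
  proof -
    have "k Z = Phi (cscale \<i> (mat 1)) * Phi (\<Psi> Z)"
      unfolding k_def Phi_mult[symmetric] by (simp add: cscale_mult_left)
    then have "norm (k Z) \<le> norm (Phi (cscale \<i> (mat 1 :: ('v,'q) op))) * norm (Phi (\<Psi> Z))"
      by (simp add: norm_mult_ineq)
    also have "\<dots> \<le> 1 * norm (Phi (\<Psi> Z))" by (intro mult_right_mono J) simp
    finally show ?thesis by (simp add: n_def norm_Phi)
  qed
  define N where "N = interaction_norm E (F_alpha \<alpha>) \<Psi>"
  define Fd where "Fd = F_alpha \<alpha> (real (setdist E X Y))"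
  have Fpos: "F_alpha \<alpha> r > 0" if "r \<ge> 0" for r
    unfolding F_alpha_def using that by simp
  have pair: "sum n {Z. x \<in> Z \<and> y \<in> Z} \<le> N * Fd" if x: "x \<in> X" and y: "y \<in> Y" for x y
  proof -
    define g where "g xy = (\<Sum>Z \<in> {Z. fst xy \<in> Z \<and> snd xy \<in> Z}. opnorm (\<Psi> Z)) /
        F_alpha \<alpha> (real (gdist E (fst xy) (snd xy)))" for xy
    have N_eq: "N = (SUP xy \<in> UNIV. g xy)"
      unfolding N_def interaction_norm_def g_def ..
    have gN: "g (x, y) \<le> N"
      unfolding N_eq by (rule cSUP_upper) (auto intro: bdd_above_finite)
    have Fg: "F_alpha \<alpha> (real (gdist E x y)) > 0" by (rule Fpos) simp
    have s_le: "sum n {Z. x \<in> Z \<and> y \<in> Z} \<le> N * F_alpha \<alpha> (real (gdist E x y))"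
      using gN Fg by (simp add: g_def n_def pos_divide_le_eq)
    have Nnn: "N \<ge> 0"
    proof -
      have "0 \<le> g (x, y)" unfolding g_def using Fg
        by (intro divide_nonneg_pos sum_nonneg) (auto simp: nn[unfolded n_def])
      then show ?thesis using gN by simp
    qed
    have sd: "setdist E X Y \<le> gdist E x y"
      unfolding setdist_def
      by (rule Min_le) (use x y in \<open>auto intro: finite_image_set2\<close>)
    have "F_alpha \<alpha> (real (gdist E x y)) \<le> Fd"
      unfolding Fd_def F_alpha_def
      by (rule powr_mono2') (use assms(1) sd in auto)
    then have "N * F_alpha \<alpha> (real (gdist E x y)) \<le> N * Fd"
      by (rule mult_left_mono) (rule Nnn)
    then show ?thesis using s_le by linarith
  qed
  have nS1: "norm S1 \<le> real (card X) * real (card Y) * N * Fd"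
  proof -
    have "norm S1 \<le> sum (\<lambda>Z. norm (k Z)) P1" unfolding S1_def by (rule norm_sum)
    also have "\<dots> \<le> sum n P1" by (rule sum_mono) (rule nk)
    also have "\<dots> \<le> (\<Sum>x\<in>X. \<Sum>y\<in>Y. sum n {Z. x \<in> Z \<and> y \<in> Z})"
      unfolding P1_def by (rule comb_bound) (rule nn)
    also have "\<dots> \<le> (\<Sum>x\<in>X. \<Sum>y\<in>Y. N * Fd)"
      by (intro sum_mono pair)
    also have "\<dots> = real (card X) * real (card Y) * N * Fd" by simp
    finally show ?thesis .
  qed
  have "4 * norm S1 * norm a * norm b * \<bar>t\<bar>
      \<le> 4 * (real (card X) * real (card Y) * N * Fd) * norm a * norm b * \<bar>t\<bar>"
    by (intro mult_right_mono mult_left_mono nS1) auto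
  with main show ?thesis
    unfolding N_def[symmetric] Fd_def[symmetric] a_def b_def norm_Phi
    by (simp add: mult_ac)
qed

end
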